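(* Let $G=(X,b,m,c)$ be a weighted graph with $c=0$, let $p\in(1,\infty)$, let $V\subseteq X$ and $\psi,\theta\colon X\to\mathbb{R}$. A function $u\in K_{\psi,\theta}(V)$ is a solution to the obstacle problem on $V$ with obstacle $\psi$ and boundary data $\theta$ if and only if $$\mathcal{E}_{p,\overline V}(u,u)=\min\{\mathcal{E}_{p,\overline V}(v,v):v\in K_{\psi,\theta}(V)\}.$$
   Context: Weighted graph $G=(X,b,m,c)$: $X$ countably infinite; $b$ symmetric, nonnegative, zero on the diagonal, $\sum_yb(x,y)<\infty$; $m>0$; $c\ge0$; $x\sim y$ iff $b(x,y)>0$; $X$ connected. $\partial_eV=\{y\in X\setminus V:y\sim z\text{ for some }z\in V\}$, $\overline V=V\cup\partial_eV$. $a^{\langle p-1\rangle}=|a|^{p-2}a$. For $U\subseteq X$ and functions $u,w$, $\mathcal{E}_{p,U}(u,w)=\frac12\sum_{x,y\in U}b(x,y)(u(x)-u(y))^{\langle p-1\rangle}(w(x)-w(y))$ (with $c=0$), whenever the sum converges absolutely. $D^p(\overline V)=\{v\colon X\to\mathbb{R}:\sum_{x,y\in\overline V}b(x,y)|v(x)-v(y)|^p<\infty\}$. $K_{\psi,\theta}(V)=\{v\in D^p(\overline V):v\ge\psi\text{ on }V,\ v=\theta\text{ on }\partial_eV\}$. A solution to the obstacle problem on $V$ with obstacle $\psi$ and boundary data $\theta$ is $u\in K_{\psi,\theta}(V)$ with $\mathcal{E}_{p,\overline V}(u,v-u)\ge0$ for all $v\in K_{\psi,\theta}(V)$. *)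

theory Defs
  imports "HOL-Analysis.Analysis"
begin

text \<open>Weighted graph (X,b,m,c) with vertex set X = UNIV of type 'a.\<close>

definition graph_edges :: "('a \<Rightarrow> 'a \<Rightarrow> real) \<Rightarrow> ('a \<times> 'a) set" where
  "graph_edges b = {(x, y). b x y > 0}"

definition weighted_graph ::
  "('a \<Rightarrow> 'a \<Rightarrow> real) \<Rightarrow> ('a \<Rightarrow> real) \<Rightarrow> ('a \<Rightarrow> real) \<Rightarrow> bool" where
  "weighted_graph b m c \<longleftrightarrow>
     countable (UNIV :: 'a set) \<and> infinite (UNIV :: 'a set) \<and>
     (\<forall>x y. b x y = b y x) \<and> (\<forall>x y. b x y \<ge> 0) \<and> (\<forall>x. b x x = 0) \<and>
     (\<forall>x. (\<lambda>y. b x y) summable_on UNIV) \<and>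
     (\<forall>x. m x > 0) \<and> (\<forall>x. c x \<ge> 0) \<and>
     (\<forall>x y. (x, y) \<in> (graph_edges b)\<^sup>*)"

definition ext_boundary :: "('a \<Rightarrow> 'a \<Rightarrow> real) \<Rightarrow> 'a set \<Rightarrow> 'a set" where
  "ext_boundary b V = {y. y \<notin> V \<and> (\<exists>z\<in>V. b y z > 0)}"

definition closure_set :: "('a \<Rightarrow> 'a \<Rightarrow> real) \<Rightarrow> 'a set \<Rightarrow> 'a set" where
  "closure_set b V = V \<union> ext_boundary b V"

text \<open>a^{<q>} = |a|^{q-1} a = sgn a * |a|^q\<close>
definition spow :: "real \<Rightarrow> real \<Rightarrow> real" where
  "spow a q = sgn a * \<bar>a\<bar> powr q"

text \<open>E_{p,U}(u,w) with c = 0 (sum taken as an unordered sum over U x U).\<close>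
definition energy ::
  "('a \<Rightarrow> 'a \<Rightarrow> real) \<Rightarrow> real \<Rightarrow> 'a set \<Rightarrow> ('a \<Rightarrow> real) \<Rightarrow> ('a \<Rightarrow> real) \<Rightarrow> real" where
  "energy b p U u w =
     1/2 * (\<Sum>\<^sub>\<infinity>(x, y)\<in>U \<times> U. b x y * spow (u x - u y) (p - 1) * (w x - w y))"

definition Dp :: "('a \<Rightarrow> 'a \<Rightarrow> real) \<Rightarrow> real \<Rightarrow> 'a set \<Rightarrow> ('a \<Rightarrow> real) set" where
  "Dp b p W = {v. (\<lambda>(x, y). b x y * \<bar>v x - v y\<bar> powr p) summable_on (W \<times> W)}"

definition Kset ::
  "('a \<Rightarrow> 'a \<Rightarrow> real) \<Rightarrow> real \<Rightarrow> 'a set \<Rightarrow> ('a \<Rightarrow> real) \<Rightarrow> ('a \<Rightarrow> real) \<Rightarrow> ('a \<Rightarrow> real) set" where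
  "Kset b p V \<psi> \<theta> = {v \<in> Dp b p (closure_set b V).
      (\<forall>x\<in>V. v x \<ge> \<psi> x) \<and> (\<forall>x\<in>ext_boundary b V. v x = \<theta> x)}"

definition obstacle_solution ::
  "('a \<Rightarrow> 'a \<Rightarrow> real) \<Rightarrow> real \<Rightarrow> 'a set \<Rightarrow> ('a \<Rightarrow> real) \<Rightarrow> ('a \<Rightarrow> real) \<Rightarrow> ('a \<Rightarrow> real) \<Rightarrow> bool" where
  "obstacle_solution b p V \<psi> \<theta> u \<longleftrightarrow>
     u \<in> Kset b p V \<psi> \<theta> \<and>
     (\<forall>v\<in>Kset b p V \<psi> \<theta>. energy b p (closure_set b V) u (\<lambda>x. v x - u x) \<ge> 0)"

end

theory Submission
  imports Defs
begin


lemma pm: "\<bar>a::real\<bar> powr (p-1) * \<bar>a\<bar> = \<bar>a\<bar> powr p"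
  using powr_mult_base'[of "\<bar>a\<bar>" "p-1"] by (simp add: mult.commute)

lemma spow_mult_self: "p > 1 \<Longrightarrow> spow a (p-1) * a = \<bar>a\<bar> powr p"
  unfolding spow_def
proof -
  assume p: "p > 1"
  show "sgn a * \<bar>a\<bar> powr (p - 1) * a = \<bar>a\<bar> powr p"
  proof (cases "a = 0")
    case True then show ?thesis using p by simp
  next
    case False
    have "sgn a * a = \<bar>a\<bar>" by (simp add: abs_sgn mult.commute)
    hence "sgn a * \<bar>a\<bar> powr (p - 1) * a = \<bar>a\<bar> * \<bar>a\<bar> powr (p-1)"
      using False by (simp add: mult.commute mult.left_commute)
    also have "\<dots> = \<bar>a\<bar> powr p" using powr_mult_base'[of "\<bar>a\<bar>" "p-1"] by simp
    finally show ?thesis .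
  qed
qed

lemma abs_spow: "\<bar>spow a q\<bar> = (if a = 0 then 0 else \<bar>a\<bar> powr q)"
  by (auto simp: spow_def abs_mult)

lemma young_crude:
  assumes p: "p > 1"
  shows "\<bar>spow a (p-1) * c\<bar> \<le> \<bar>a\<bar> powr p + \<bar>c\<bar> powr p"
proof (cases "a = 0")
  case True then show ?thesis by (simp add: spow_def)
next
  case False
  have e: "\<bar>spow a (p-1) * c\<bar> = \<bar>a\<bar> powr (p-1) * \<bar>c\<bar>"
    using False by (simp add: abs_mult abs_spow)
  show ?thesis
  proof (cases "\<bar>c\<bar> \<le> \<bar>a\<bar>")
    case True
    have "\<bar>a\<bar> powr (p-1) * \<bar>c\<bar> \<le> \<bar>a\<bar> powr (p-1) * \<bar>a\<bar>"
      by (intro mult_left_mono True) simp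
    also have "\<dots> = \<bar>a\<bar> powr p" by (rule pm)
    finally show ?thesis using e by (smt (verit) powr_ge_zero)
  next
    case False2: False
    have "\<bar>a\<bar> powr (p-1) \<le> \<bar>c\<bar> powr (p-1)"
      using False2 p by (intro powr_mono2) auto
    hence "\<bar>a\<bar> powr (p-1) * \<bar>c\<bar> \<le> \<bar>c\<bar> powr (p-1) * \<bar>c\<bar>"
      by (intro mult_right_mono) auto
    also have "\<dots> = \<bar>c\<bar> powr p" by (rule pm)
    finally show ?thesis using e by (smt (verit) powr_ge_zero)
  qed
qed

lemma deriv_abs_powr:
  assumes p: "p > 1"
  shows "((\<lambda>z. \<bar>z\<bar> powr p) has_real_derivative p * spow x (p-1)) (at x)"
proof (cases x "0::real" rule: linorder_cases)
  case greater
  have ev: "eventually (\<lambda>z. \<bar>z\<bar> powr p = z powr p) (nhds x)"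
    using eventually_nhds_in_open[of "{0<..}" x] greater
    by (auto elim!: eventually_mono)
  have "((\<lambda>z. z powr p) has_real_derivative p * x powr (p-1)) (at x)"
    using has_real_derivative_powr[OF greater] .
  moreover have "p * x powr (p-1) = p * spow x (p-1)" using greater by (simp add: spow_def)
  ultimately show ?thesis using DERIV_cong_ev[OF refl ev] by simp
next
  case less
  have ev: "eventually (\<lambda>z. \<bar>z\<bar> powr p = (-z) powr p) (nhds x)"
    using eventually_nhds_in_open[of "{..<0}" x] less
    by (auto elim!: eventually_mono)
  have "((\<lambda>z. (-z) powr p) has_real_derivative p * (-x) powr (p-1) * (-1)) (at x)"
    using less by (auto intro!: derivative_eq_intros)
  moreover have "p * (-x) powr (p-1) * (-1) = p * spow x (p-1)" using less by (simp add: spow_def)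
  ultimately show ?thesis using DERIV_cong_ev[OF refl ev] by simp
next
  case equal
  have "((\<lambda>h. \<bar>h\<bar> powr (p-1)) \<longlongrightarrow> \<bar>0\<bar> powr (p-1)) (at 0)"
    using p by (intro tendsto_intros continuous_intros) auto
  hence lim: "((\<lambda>h. \<bar>h\<bar> powr (p-1)) \<longlongrightarrow> 0) (at (0::real))" using p by simp
  have "((\<lambda>h. (\<bar>0 + h\<bar> powr p - \<bar>0\<bar> powr p) / h) \<longlongrightarrow> 0) (at 0)"
  proof (rule Lim_null_comparison[OF _ lim])
    show "\<forall>\<^sub>F h in at 0. norm ((\<bar>0 + h\<bar> powr p - \<bar>0\<bar> powr p) / h) \<le> \<bar>h\<bar> powr (p-1)"
    proof (rule always_eventually, rule allI)
      fix h :: real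
      show "norm ((\<bar>0 + h\<bar> powr p - \<bar>0\<bar> powr p) / h) \<le> \<bar>h\<bar> powr (p-1)"
      proof (cases "h = 0")
        case False
        have "\<bar>h\<bar> powr p = \<bar>h\<bar> powr (p-1) * \<bar>h\<bar>"
          using pm[of h p] by simp
        then show ?thesis using False p by (simp add: abs_divide)
      qed simp
    qed
  qed
  then show ?thesis using equal p by (simp add: DERIV_def spow_def)
qed

lemma convex_abs_powr:
  assumes p: "p > 1"
  shows "convex_on UNIV (\<lambda>z::real. \<bar>z\<bar> powr p)"
proof (rule convex_on_realI[where f' = "\<lambda>x. p * spow x (p-1)"])
  show "\<And>x. x \<in> UNIV \<Longrightarrow> ((\<lambda>z. \<bar>z\<bar> powr p) has_real_derivative p * spow x (p-1)) (at x)"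
    using deriv_abs_powr[OF p] by blast
  show "\<And>x y. x \<in> UNIV \<Longrightarrow> y \<in> UNIV \<Longrightarrow> x \<le> y \<Longrightarrow> p * spow x (p-1) \<le> p * spow y (p-1)"
  proof -
    fix x y :: real assume "x \<le> y"
    have "spow x (p-1) \<le> spow y (p-1)"
    proof (cases "0 \<le> x")
      case True
      then show ?thesis using \<open>x \<le> y\<close> p by (auto simp: spow_def sgn_if intro!: powr_mono2)
    next
      case False
      show ?thesis
      proof (cases "y \<le> 0")
        case True
        then show ?thesis using \<open>x \<le> y\<close> False p by (auto simp: spow_def sgn_if intro!: powr_mono2)
      next
        case False2: False
        then show ?thesis using False p by (auto simp: spow_def sgn_if intro: order_trans[OF _ powr_ge_zero])
      qed
    qed
    then show "p * spow x (p-1) \<le> p * spow y (p-1)" using p by simp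
  qed
qed auto

lemma convex_ineq:
  fixes p t x y :: real
  assumes p: "p > 1" and t: "0 \<le> t" "t \<le> 1"
  shows "\<bar>(1-t)*x + t*y\<bar> powr p \<le> (1-t) * \<bar>x\<bar> powr p + t * \<bar>y\<bar> powr p"
  using convex_onD[OF convex_abs_powr[OF p], of t x y] t by simp

lemma tangent_ineq:
  fixes p x y :: real
  assumes p: "p > 1"
  shows "\<bar>y\<bar> powr p \<ge> \<bar>x\<bar> powr p + p * spow x (p-1) * (y - x)"
  using convex_on_imp_above_tangent[OF convex_abs_powr[OF p], of x y "p * spow x (p-1)"]
    deriv_abs_powr[OF p, of x] by auto

lemma dq_limit:
  fixes p a c :: real
  assumes p: "p > 1"
  shows "((\<lambda>t. (\<bar>a + t*c\<bar> powr p - \<bar>a\<bar> powr p) / t) \<longlongrightarrow> p * spow a (p-1) * c) (at_right 0)"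
proof -
  have d: "((\<lambda>t. \<bar>a + t*c\<bar> powr p) has_real_derivative p * spow a (p-1) * c) (at 0)"
  proof -
    have d1: "((\<lambda>z. \<bar>z\<bar> powr p) has_real_derivative p * spow a (p-1)) (at ((\<lambda>t. a + t*c) 0))"
      using deriv_abs_powr[OF p, of a] by simp
    have g: "((\<lambda>t. a + t*c) has_real_derivative c) (at 0)"
      by (auto intro!: derivative_eq_intros)
    show ?thesis using DERIV_chain2[OF d1 g] by simp
  qed
  hence "((\<lambda>h. (\<bar>a + (0+h)*c\<bar> powr p - \<bar>a + 0*c\<bar> powr p) / h) \<longlongrightarrow> p * spow a (p-1) * c) (at 0)"
    by (simp add: DERIV_def)
  hence "((\<lambda>t. (\<bar>a + t*c\<bar> powr p - \<bar>a\<bar> powr p) / t) \<longlongrightarrow> p * spow a (p-1) * c) (at 0)" by simp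
  thus ?thesis by (rule filterlim_mono) (simp_all add: at_le)
qed


lemma summable_on_diff_real:
  fixes f g :: "'q \<Rightarrow> real"
  assumes "f summable_on A" "g summable_on A"
  shows "(\<lambda>x. f x - g x) summable_on A"
  using summable_on_add[OF assms(1) summable_on_uminus[THEN iffD2, OF assms(2)]] by simp

lemma infsum_diff_real:
  fixes f g :: "'q \<Rightarrow> real"
  assumes "f summable_on A" "g summable_on A"
  shows "infsum (\<lambda>x. f x - g x) A = infsum f A - infsum g A"
  using infsum_add[OF assms(1) summable_on_uminus[THEN iffD2, OF assms(2)]] infsum_uminus[of g A] by simp

lemma key_limit:
  fixes B a c :: "'q \<Rightarrow> real" and p :: real
  assumes p: "p > 1" and Bnn: "\<And>q. q \<in> P \<Longrightarrow> B q \<ge> 0"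
    and sC: "(\<lambda>q. B q * spow (a q) (p-1) * c q) summable_on P"
    and sT: "\<And>t. 0 \<le> t \<Longrightarrow> t \<le> 1 \<Longrightarrow> (\<lambda>q. B q * \<bar>a q + t * c q\<bar> powr p) summable_on P"
    and mn: "\<And>t. 0 < t \<Longrightarrow> t \<le> 1 \<Longrightarrow>
       infsum (\<lambda>q. B q * \<bar>a q\<bar> powr p) P \<le> infsum (\<lambda>q. B q * \<bar>a q + t * c q\<bar> powr p) P"
  shows "infsum (\<lambda>q. B q * spow (a q) (p-1) * c q) P \<ge> 0"
proof (rule ccontr)
  define S where "S = infsum (\<lambda>q. B q * spow (a q) (p-1) * c q) P"
  assume "\<not> ?thesis"
  hence Sneg: "S < 0" by (simp add: S_def)
  define \<epsilon> where "\<epsilon> = - p * S"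
  have epos: "\<epsilon> > 0" using Sneg p by (simp add: \<epsilon>_def mult_pos_neg)
  define F0 where "F0 = (\<lambda>q. B q * \<bar>a q\<bar> powr p)"
  define Ft where "Ft = (\<lambda>t q. B q * \<bar>a q + t * c q\<bar> powr p)"
  define D where "D = (\<lambda>t q. B q * ((\<bar>a q + t * c q\<bar> powr p - \<bar>a q\<bar> powr p) / t
                          - p * spow (a q) (p-1) * c q))"
  have s0: "F0 summable_on P" using sT[of 0] by (simp add: F0_def)
  have Deq: "D t q = (1/t) * Ft t q - (1/t) * F0 q - p * (B q * spow (a q) (p-1) * c q)" for t q
    by (simp add: D_def Ft_def F0_def field_simps diff_divide_distrib)
  have sD: "D t summable_on P" and iD: "infsum (D t) P = (1/t) * infsum (Ft t) P - (1/t) * infsum F0 P - p * S"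
    if t: "0 \<le> t" "t \<le> 1" for t
  proof -
    have a1: "(\<lambda>q. (1/t) * Ft t q) summable_on P"
      using sT[OF t] by (intro summable_on_cmult_right) (simp add: Ft_def)
    have a2: "(\<lambda>q. (1/t) * F0 q) summable_on P" using s0 by (intro summable_on_cmult_right)
    have a3: "(\<lambda>q. p * (B q * spow (a q) (p-1) * c q)) summable_on P" using sC by (intro summable_on_cmult_right)
    have a12: "(\<lambda>q. (1/t) * Ft t q - (1/t) * F0 q) summable_on P" by (rule summable_on_diff_real[OF a1 a2])
    show "D t summable_on P" unfolding Deq by (rule summable_on_diff_real[OF a12 a3])
    have "infsum (D t) P = infsum (\<lambda>q. (1/t) * Ft t q - (1/t) * F0 q) P - infsum (\<lambda>q. p * (B q * spow (a q) (p-1) * c q)) P"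
      unfolding Deq by (rule infsum_diff_real[OF a12 a3])
    also have "\<dots> = (1/t) * infsum (Ft t) P - (1/t) * infsum F0 P - p * S"
      using infsum_diff_real[OF a1 a2] infsum_cmult_right[of "1/t" "Ft t" P] infsum_cmult_right[of "1/t" F0 P]
        infsum_cmult_right[of p "\<lambda>q. B q * spow (a q) (p-1) * c q" P] sT[OF t] s0 sC
      by (simp add: S_def Ft_def)
    finally show "infsum (D t) P = (1/t) * infsum (Ft t) P - (1/t) * infsum F0 P - p * S" .
  qed
  have Dlow: "infsum (D t) P \<ge> \<epsilon>" if t: "0 < t" "t \<le> 1" for t
  proof -
    have "infsum F0 P \<le> infsum (Ft t) P" using mn[OF t] by (simp add: F0_def Ft_def)
    hence "(1/t) * infsum (Ft t) P - (1/t) * infsum F0 P \<ge> 0" using t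
      by (simp add: divide_right_mono)
    thus ?thesis using iD[of t] t by (simp add: \<epsilon>_def)
  qed
  have Dle1: "D t q \<le> D 1 q" if t: "0 < t" "t \<le> 1" and q: "q \<in> P" for t q
  proof -
    have "\<bar>(1-t) * a q + t * (a q + c q)\<bar> powr p \<le> (1-t) * \<bar>a q\<bar> powr p + t * \<bar>a q + c q\<bar> powr p"
      using convex_ineq[OF p, of t] t by simp
    moreover have "(1-t) * a q + t * (a q + c q) = a q + t * c q" by algebra
    ultimately have "\<bar>a q + t * c q\<bar> powr p - \<bar>a q\<bar> powr p \<le> t * (\<bar>a q + c q\<bar> powr p - \<bar>a q\<bar> powr p)"
      by (simp add: algebra_simps)
    hence "(\<bar>a q + t * c q\<bar> powr p - \<bar>a q\<bar> powr p) / t \<le> \<bar>a q + c q\<bar> powr p - \<bar>a q\<bar> powr p"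
      using t by (simp add: divide_le_eq mult.commute)
    thus ?thesis unfolding D_def using Bnn[OF q] by (intro mult_left_mono) auto
  qed
  have Dnn: "D t q \<ge> 0" if t: "0 < t" and q: "q \<in> P" for t q
  proof -
    have "\<bar>a q + t * c q\<bar> powr p \<ge> \<bar>a q\<bar> powr p + p * spow (a q) (p-1) * (a q + t * c q - a q)"
      by (rule tangent_ineq[OF p])
    hence "\<bar>a q + t * c q\<bar> powr p - \<bar>a q\<bar> powr p \<ge> t * (p * spow (a q) (p-1) * c q)" by (simp add: algebra_simps)
    hence "(\<bar>a q + t * c q\<bar> powr p - \<bar>a q\<bar> powr p) / t \<ge> p * spow (a q) (p-1) * c q"
      using t by (simp add: le_divide_eq mult.commute)
    thus ?thesis unfolding D_def using Bnn[OF q] by simp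
  qed
  obtain F where F: "finite F" "F \<subseteq> P" "dist (sum (D 1) F) (infsum (D 1) P) \<le> \<epsilon>/4"
    using infsum_finite_approximation[OF sD[of 1], of "\<epsilon>/4"] epos by auto
  have tail: "infsum (D t) (P - F) \<le> infsum (D 1) (P - F)" if t: "0 < t" "t \<le> 1" for t
    using t by (intro infsum_mono summable_on_subset[OF sD] Dle1) auto
  have split: "infsum (D t) P = sum (D t) F + infsum (D t) (P - F)" if t: "0 \<le> t" "t \<le> 1" for t
  proof -
    have "P = F \<union> (P - F)" using F by auto
    hence "infsum (D t) P = infsum (D t) (F \<union> (P - F))" by simp
    also have "\<dots> = infsum (D t) F + infsum (D t) (P - F)"
      using F sD[OF t] by (intro infsum_Un_disjoint summable_on_subset[OF sD[OF t]]) auto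
    finally show ?thesis using F by simp
  qed
  have tail1: "infsum (D 1) (P - F) \<le> \<epsilon>/4"
    using split[of 1] F(3) by (simp add: dist_real_def)
  have lim: "((\<lambda>t. sum (D t) F) \<longlongrightarrow> (\<Sum>q\<in>F. 0)) (at_right 0)"
  proof (rule tendsto_sum)
    fix q assume "q \<in> F"
    have "((\<lambda>t. B q * ((\<bar>a q + t * c q\<bar> powr p - \<bar>a q\<bar> powr p) / t - p * spow (a q) (p-1) * c q))
       \<longlongrightarrow> B q * (p * spow (a q) (p-1) * c q - p * spow (a q) (p-1) * c q)) (at_right 0)"
      by (intro tendsto_intros dq_limit[OF p])
    thus "((\<lambda>t. D t q) \<longlongrightarrow> 0) (at_right 0)" by (simp add: D_def)
  qed
  hence "eventually (\<lambda>t. sum (D t) F < \<epsilon>/2) (at_right 0)"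
    using epos by (auto dest!: order_tendstoD(2)[where a="\<epsilon>/2"])
  moreover have "eventually (\<lambda>t. t < 1 \<and> t > 0) (at_right (0::real))"
    by (auto simp: eventually_at_right_field intro!: exI[of _ 1])
  ultimately have "eventually (\<lambda>t. sum (D t) F < \<epsilon>/2 \<and> t < 1 \<and> t > 0) (at_right (0::real))"
    by (rule eventually_conj)
  then obtain t where t: "sum (D t) F < \<epsilon>/2" "t < 1" "t > 0"
    using eventually_happens[of _ "at_right (0::real)"] trivial_limit_at_right_real[of 0] by (auto simp: trivial_limit_def)
  have "infsum (D t) P = sum (D t) F + infsum (D t) (P - F)" using split[of t] t by simp
  also have "\<dots> \<le> sum (D t) F + infsum (D 1) (P - F)" using tail[of t] t by simp
  also have "\<dots> < \<epsilon>" using t tail1 epos by simp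
  finally show False using Dlow[of t] t by simp
qed




lemma energy_self:
  assumes p: "p > 1"
  shows "energy b p W v v = 1/2 * infsum (\<lambda>(x,y). b x y * \<bar>v x - v y\<bar> powr p) (W \<times> W)"
  unfolding energy_def
  by (rule arg_cong[where f="\<lambda>s. 1/2 * s"], rule infsum_cong)
     (auto simp: mult.assoc spow_mult_self[OF p])

lemma cross_summable:
  assumes p: "p > 1" and bnn: "\<And>x y. b x y \<ge> 0"
    and u: "u \<in> Dp b p W" and v: "v \<in> Dp b p W"
  shows "(\<lambda>(x,y). b x y * spow (u x - u y) (p-1) * (v x - v y)) summable_on (W \<times> W)"
proof -
  have su: "(\<lambda>(x,y). b x y * \<bar>u x - u y\<bar> powr p) summable_on (W \<times> W)" using u by (simp add: Dp_def)
  have sv: "(\<lambda>(x,y). b x y * \<bar>v x - v y\<bar> powr p) summable_on (W \<times> W)" using v by (simp add: Dp_def)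
  have s: "(\<lambda>q. (case q of (x,y) \<Rightarrow> b x y * \<bar>u x - u y\<bar> powr p) + (case q of (x,y) \<Rightarrow> b x y * \<bar>v x - v y\<bar> powr p)) summable_on (W \<times> W)"
    by (rule summable_on_add[OF su sv])
  have "(\<lambda>q. \<bar>case q of (x,y) \<Rightarrow> b x y * spow (u x - u y) (p-1) * (v x - v y)\<bar>) summable_on (W \<times> W)"
  proof (rule summable_on_comparison_test[OF s])
    fix q :: "'a \<times> 'a"
    obtain x y where q: "q = (x,y)" by force
    have "\<bar>b x y * spow (u x - u y) (p-1) * (v x - v y)\<bar> = b x y * \<bar>spow (u x - u y) (p-1) * (v x - v y)\<bar>"
      using bnn[of x y] by (simp add: abs_mult)
    also have "\<dots> \<le> b x y * (\<bar>u x - u y\<bar> powr p + \<bar>v x - v y\<bar> powr p)"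
      using bnn[of x y] young_crude[OF p] by (intro mult_left_mono) auto
    finally show "\<bar>case q of (x,y) \<Rightarrow> b x y * spow (u x - u y) (p-1) * (v x - v y)\<bar>
       \<le> (case q of (x,y) \<Rightarrow> b x y * \<bar>u x - u y\<bar> powr p) + (case q of (x,y) \<Rightarrow> b x y * \<bar>v x - v y\<bar> powr p)"
      by (simp add: q algebra_simps)
  qed simp
  thus ?thesis
    by (subst summable_on_iff_abs_summable_on_real) simp
qed

lemma Dp_convex:
  assumes p: "p > 1" and bnn: "\<And>x y. b x y \<ge> 0"
    and u: "u \<in> Dp b p W" and v: "v \<in> Dp b p W" and t: "0 \<le> t" "t \<le> 1"
  shows "(\<lambda>x. u x + t * (v x - u x)) \<in> Dp b p W"
proof -
  have su: "(\<lambda>(x,y). b x y * \<bar>u x - u y\<bar> powr p) summable_on (W \<times> W)" using u by (simp add: Dp_def)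
  have sv: "(\<lambda>(x,y). b x y * \<bar>v x - v y\<bar> powr p) summable_on (W \<times> W)" using v by (simp add: Dp_def)
  have s: "(\<lambda>q. (1-t) * (case q of (x,y) \<Rightarrow> b x y * \<bar>u x - u y\<bar> powr p) + t * (case q of (x,y) \<Rightarrow> b x y * \<bar>v x - v y\<bar> powr p)) summable_on (W \<times> W)"
    by (intro summable_on_add summable_on_cmult_right su sv)
  have "(\<lambda>(x,y). b x y * \<bar>(u x + t * (v x - u x)) - (u y + t * (v y - u y))\<bar> powr p) summable_on (W \<times> W)"
  proof (rule summable_on_comparison_test[OF s])
    fix q :: "'a \<times> 'a"
    obtain x y where q: "q = (x,y)" by force
    have e: "(u x + t * (v x - u x)) - (u y + t * (v y - u y)) = (1-t) * (u x - u y) + t * (v x - v y)"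
      by algebra
    have "b x y * \<bar>(u x + t * (v x - u x)) - (u y + t * (v y - u y))\<bar> powr p
        \<le> b x y * ((1-t) * \<bar>u x - u y\<bar> powr p + t * \<bar>v x - v y\<bar> powr p)"
      unfolding e using bnn[of x y] convex_ineq[OF p t] by (intro mult_left_mono) auto
    thus "(case q of (x,y) \<Rightarrow> b x y * \<bar>(u x + t * (v x - u x)) - (u y + t * (v y - u y))\<bar> powr p)
       \<le> (1-t) * (case q of (x,y) \<Rightarrow> b x y * \<bar>u x - u y\<bar> powr p) + t * (case q of (x,y) \<Rightarrow> b x y * \<bar>v x - v y\<bar> powr p)"
      by (simp add: q algebra_simps)
    show "0 \<le> (case q of (x,y) \<Rightarrow> b x y * \<bar>(u x + t * (v x - u x)) - (u y + t * (v y - u y))\<bar> powr p)"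
      using bnn[of x y] by (simp add: q)
  qed
  thus ?thesis by (simp add: Dp_def)
qed

lemma K_convex:
  assumes p: "p > 1" and bnn: "\<And>x y. b x y \<ge> 0"
    and u: "u \<in> Kset b p V \<psi> \<theta>" and v: "v \<in> Kset b p V \<psi> \<theta>" and t: "0 \<le> t" "t \<le> 1"
  shows "(\<lambda>x. u x + t * (v x - u x)) \<in> Kset b p V \<psi> \<theta>"
proof -
  have "(\<lambda>x. u x + t * (v x - u x)) \<in> Dp b p (closure_set b V)"
    using u v by (intro Dp_convex[OF p bnn _ _ t]) (auto simp: Kset_def)
  moreover have "u x + t * (v x - u x) \<ge> \<psi> x" if "x \<in> V" for x
  proof -
    have "u x \<ge> \<psi> x" "v x \<ge> \<psi> x" using u v that by (auto simp: Kset_def)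
    hence "(1-t) * u x + t * v x \<ge> (1-t) * \<psi> x + t * \<psi> x"
      using t by (intro add_mono mult_left_mono) auto
    thus ?thesis by (simp add: algebra_simps)
  qed
  ultimately show ?thesis using u v by (auto simp: Kset_def)
qed



lemma energy_tangent:
  assumes p: "p > 1" and bnn: "\<And>x y. b x y \<ge> 0"
    and u: "u \<in> Dp b p W" and v: "v \<in> Dp b p W"
  shows "(\<lambda>(x,y). b x y * spow (u x - u y) (p-1) * ((v x - u x) - (v y - u y))) summable_on (W \<times> W)"
    and "energy b p W v v \<ge> energy b p W u u + p * energy b p W u (\<lambda>x. v x - u x)"
proof -
  let ?C = "\<lambda>(x,y). b x y * spow (u x - u y) (p-1) * ((v x - u x) - (v y - u y))"
  let ?Fu = "\<lambda>(x,y). b x y * \<bar>u x - u y\<bar> powr p"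
  let ?Fv = "\<lambda>(x,y). b x y * \<bar>v x - v y\<bar> powr p"
  have s1: "(\<lambda>(x,y). b x y * spow (u x - u y) (p-1) * (v x - v y)) summable_on (W \<times> W)"
    by (rule cross_summable[OF p bnn u v])
  have s2: "(\<lambda>(x,y). b x y * spow (u x - u y) (p-1) * (u x - u y)) summable_on (W \<times> W)"
    by (rule cross_summable[OF p bnn u u])
  have "(\<lambda>q. (case q of (x,y) \<Rightarrow> b x y * spow (u x - u y) (p-1) * (v x - v y))
           - (case q of (x,y) \<Rightarrow> b x y * spow (u x - u y) (p-1) * (u x - u y))) summable_on (W \<times> W)"
    by (rule summable_on_diff_real[OF s1 s2])
  then show sC: "?C summable_on (W \<times> W)"
    by (rule summable_on_cong[THEN iffD1, rotated]) (auto simp: algebra_simps)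
  have su: "?Fu summable_on (W \<times> W)" using u by (simp add: Dp_def)
  have sv: "?Fv summable_on (W \<times> W)" using v by (simp add: Dp_def)
  have spC: "(\<lambda>q. p * ?C q) summable_on (W \<times> W)" by (rule summable_on_cmult_right[OF sC])
  have "infsum (\<lambda>q. ?Fu q + p * ?C q) (W \<times> W) \<le> infsum ?Fv (W \<times> W)"
  proof (rule infsum_mono[OF summable_on_add[OF su spC] sv])
    fix q :: "'a \<times> 'a"
    obtain x y where q: "q = (x,y)" by force
    have "\<bar>v x - v y\<bar> powr p \<ge> \<bar>u x - u y\<bar> powr p + p * spow (u x - u y) (p-1) * ((v x - v y) - (u x - u y))"
      by (rule tangent_ineq[OF p])
    hence "b x y * \<bar>v x - v y\<bar> powr p \<ge> b x y * (\<bar>u x - u y\<bar> powr p + p * spow (u x - u y) (p-1) * ((v x - v y) - (u x - u y)))"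
      using bnn[of x y] by (rule mult_left_mono)
    thus "?Fu q + p * ?C q \<le> ?Fv q" by (simp add: q algebra_simps)
  qed
  also note infsum_add[OF su spC]
  hence "infsum ?Fu (W \<times> W) + p * infsum ?C (W \<times> W) \<le> infsum ?Fv (W \<times> W)"
    using calculation infsum_cmult_right[of p ?C "W \<times> W"] sC by simp
  thus "energy b p W v v \<ge> energy b p W u u + p * energy b p W u (\<lambda>x. v x - u x)"
    unfolding energy_self[OF p] by (simp add: energy_def)
qed


theorem lemma3p23:
  fixes b :: "'a \<Rightarrow> 'a \<Rightarrow> real" and m c :: "'a \<Rightarrow> real"
    and p :: real and V :: "'a set" and \<psi> \<theta> u :: "'a \<Rightarrow> real"
  assumes "weighted_graph b m c" and "c = (\<lambda>_. 0)" and "1 < p"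
    and "u \<in> Kset b p V \<psi> \<theta>"
  shows "obstacle_solution b p V \<psi> \<theta> u \<longleftrightarrow>
    (energy b p (closure_set b V) u u \<in> {energy b p (closure_set b V) v v | v. v \<in> Kset b p V \<psi> \<theta>} \<and>
     (\<forall>v\<in>Kset b p V \<psi> \<theta>. energy b p (closure_set b V) u u \<le> energy b p (closure_set b V) v v))"
proof -
  have p: "p > 1" using assms(3) by simp
  have bnn: "\<And>x y. b x y \<ge> 0" using assms(1) by (simp add: weighted_graph_def)
  let ?W = "closure_set b V"
  let ?K = "Kset b p V \<psi> \<theta>"
  have uK: "u \<in> ?K" by (rule assms(4))
  have KD: "w \<in> Dp b p ?W" if "w \<in> ?K" for w using that by (simp add: Kset_def)
  show ?thesis
  proof
    assume sol: "obstacle_solution b p V \<psi> \<theta> u"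
    have "energy b p ?W u u \<le> energy b p ?W v v" if v: "v \<in> ?K" for v
    proof -
      have "energy b p ?W u (\<lambda>x. v x - u x) \<ge> 0" using sol v by (simp add: obstacle_solution_def)
      thus ?thesis using energy_tangent(2)[OF p bnn KD[OF uK] KD[OF v]] p
        by (smt (verit) mult_nonneg_nonneg)
    qed
    thus "energy b p ?W u u \<in> {energy b p ?W v v | v. v \<in> ?K} \<and> (\<forall>v\<in>?K. energy b p ?W u u \<le> energy b p ?W v v)"
      using uK by blast
  next
    assume min: "energy b p ?W u u \<in> {energy b p ?W v v | v. v \<in> ?K} \<and> (\<forall>v\<in>?K. energy b p ?W u u \<le> energy b p ?W v v)"
    have "energy b p ?W u (\<lambda>x. v x - u x) \<ge> 0" if v: "v \<in> ?K" for v
    proof -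
      define B where "B = (\<lambda>(x::'a,y::'a). b x y)"
      define a where "a = (\<lambda>(x,y). u x - u y)"
      define cc where "cc = (\<lambda>(x,y). (v x - u x) - (v y - u y))"
      have sC0: "(\<lambda>(x,y). b x y * spow (u x - u y) (p-1) * ((v x - u x) - (v y - u y))) summable_on (?W \<times> ?W)"
        by (rule energy_tangent(1)[OF p bnn KD[OF uK] KD[OF v]])
      have sC: "(\<lambda>q. B q * spow (a q) (p-1) * cc q) summable_on (?W \<times> ?W)"
        using sC0 by (rule summable_on_cong[THEN iffD1, rotated]) (auto simp: B_def a_def cc_def)
      have wdiff: "(u x + t * (v x - u x)) - (u y + t * (v y - u y)) = (u x - u y) + t * ((v x - u x) - (v y - u y))"
        for x y t by algebra
      have sT: "(\<lambda>q. B q * \<bar>a q + t * cc q\<bar> powr p) summable_on (?W \<times> ?W)" if t: "0 \<le> t" "t \<le> 1" for t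
      proof -
        have "(\<lambda>x. u x + t * (v x - u x)) \<in> ?K" by (rule K_convex[OF p bnn uK v t])
        hence "(\<lambda>(x,y). b x y * \<bar>(u x + t * (v x - u x)) - (u y + t * (v y - u y))\<bar> powr p) summable_on (?W \<times> ?W)"
          by (simp add: Kset_def Dp_def)
        thus ?thesis
          by (rule summable_on_cong[THEN iffD1, rotated]) (auto simp: B_def a_def cc_def wdiff)
      qed
      have mn: "infsum (\<lambda>q. B q * \<bar>a q\<bar> powr p) (?W \<times> ?W) \<le> infsum (\<lambda>q. B q * \<bar>a q + t * cc q\<bar> powr p) (?W \<times> ?W)"
        if t: "0 < t" "t \<le> 1" for t
      proof -
        have "(\<lambda>x. u x + t * (v x - u x)) \<in> ?K" using t by (intro K_convex[OF p bnn uK v]) auto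
        hence "energy b p ?W u u \<le> energy b p ?W (\<lambda>x. u x + t * (v x - u x)) (\<lambda>x. u x + t * (v x - u x))"
          using min by blast
        hence "infsum (\<lambda>(x,y). b x y * \<bar>u x - u y\<bar> powr p) (?W \<times> ?W)
            \<le> infsum (\<lambda>(x,y). b x y * \<bar>(u x + t * (v x - u x)) - (u y + t * (v y - u y))\<bar> powr p) (?W \<times> ?W)"
          unfolding energy_self[OF p] by simp
        moreover have "infsum (\<lambda>(x,y). b x y * \<bar>u x - u y\<bar> powr p) (?W \<times> ?W) = infsum (\<lambda>q. B q * \<bar>a q\<bar> powr p) (?W \<times> ?W)"
          by (rule infsum_cong) (auto simp: B_def a_def)
        moreover have "infsum (\<lambda>(x,y). b x y * \<bar>(u x + t * (v x - u x)) - (u y + t * (v y - u y))\<bar> powr p) (?W \<times> ?W)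
           = infsum (\<lambda>q. B q * \<bar>a q + t * cc q\<bar> powr p) (?W \<times> ?W)"
          by (rule infsum_cong) (auto simp: B_def a_def cc_def wdiff)
        ultimately show ?thesis by simp
      qed
      have "infsum (\<lambda>q. B q * spow (a q) (p-1) * cc q) (?W \<times> ?W) \<ge> 0"
        by (rule key_limit[OF p _ sC sT mn]) (auto simp: B_def bnn split: prod.splits)
      moreover have "infsum (\<lambda>q. B q * spow (a q) (p-1) * cc q) (?W \<times> ?W) = 2 * energy b p ?W u (\<lambda>x. v x - u x)"
        unfolding energy_def by (simp, rule infsum_cong) (auto simp: B_def a_def cc_def)
      ultimately show ?thesis by simp
    qed
    thus "obstacle_solution b p V \<psi> \<theta> u" using uK by (simp add: obstacle_solution_def)
  qed
qed

end
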